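(* Consider a region discretized by the FDTD-Q scheme described in the context, with time step $\Delta t$ satisfying $$0<\Delta t<\Delta t_{\mathrm{CFL,gen}}=\frac{2}{\rho\!\left(\frac{1}{\hbar}(D_V'')^{-1/2}H(D_V'')^{-1/2}\right)},$$ where $\rho(\cdot)$ denotes the spectral radius. Then the total probability $\mathcal{P}^n=(\psi^n)^T\mathbf{P}\,\psi^n$ satisfies $\mathcal{P}^n\ge 0$ for all $n=0,1,\dots,n_t$, and the total probability and the probability current satisfy $$\frac{\mathcal{P}^{n+1}-\mathcal{P}^n}{\Delta t}=-\mathcal{I}_P^{n+\frac12},\qquad n=0,1,\dots,n_t-1.$$
   Context: Fix constants $\hbar>0$, $m>0$, cell sizes $\Delta x,\Delta y,\Delta z>0$, positive integers $n_x,n_y,n_z,n_t$ and a time step $\Delta t>0$. The region is a box made of $n_x\times n_y\times n_z$ primary cells of size $\Delta x\times\Delta y\times\Delta z$, with primary nodes $(i,j,k)$, $1\le i\le n_x+1$, $1\le j\le n_y+1$, $1\le k\le n_z+1$. Let $N=(n_x+1)(n_y+1)(n_z+1)$; vectors indexed by nodes use the ordering $i+(j-1)(n_x+1)+(k-1)(n_x+1)(n_y+1)$. Real potential values $U_{i,j,k}$ are given at the nodes; $D_U$ is the $N\times N$ diagonal matrix containing them. Let $I_p$ be the $p\times p$ identity, $\tilde I_p=\mathrm{diag}(\tfrac12,1,\dots,1,\tfrac12)$ ($p\times p$), $W_p=[0_{p\times1}\ I_p]-[I_p\ 0_{p\times 1}]$ ($p\times(p+1)$), $\otimes$ the Kronecker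 product, and $e\{p,q\}$ the $q\times 1$ vector with $1$ in position $p$ and zeros elsewhere. Define $D_V''=\Delta x\Delta y\Delta z\,\tilde I_{n_z+1}\otimes\tilde I_{n_y+1}\otimes\tilde I_{n_x+1}$; $D=[D_x\ D_y\ D_z]$ with $D_x=-I_{n_z+1}\otimes I_{n_y+1}\otimes W_{n_x}^T$, $D_y=-I_{n_z+1}\otimes W_{n_y}^T\otimes I_{n_x+1}$, $D_z=-W_{n_z}^T\otimes I_{n_y+1}\otimes I_{n_x+1}$; $D_S''=\mathrm{diag}(\Delta y\Delta z\,\tilde I_{n_z+1}\otimes\tilde I_{n_y+1}\otimes I_{n_x},\ \Delta x\Delta z\,\tilde I_{n_z+1}\otimes I_{n_y}\otimes\tilde I_{n_x+1},\ \Delta x\Delta y\,I_{n_z}\otimes\tilde I_{n_y+1}\otimes\tilde I_{n_x+1})$; $D_l'=\mathrm{diag}(\Delta x\, I_{n_x(n_y+1)(n_z+1)},\ \Delta y\, I_{(n_x+1)n_y(n_z+1)},\ \Delta z\, I_{(n_x+1)(n_y+1)n_z})$; $H=\frac{\hbar^2}{2m}D D_S''(D_l')^{-1}D^T+D_V''D_U$; $\mathbf{P}=\begin{bmatrix}D_V''&-\frac{\Delta t}{2\hbar}H\\-\frac{\Delta t}{2\hbar}H&D_V''\end{bmatrix}$. Boundary ("hanging") variables: $L=[L_W\ L_E\ L_S\ L_N\ L_B\ L_T]$ with $L_W=I_{n_z+1}\otimes I_{n_y+1}\otimes e\{1,n_x+1\}$, $L_E=I_{n_z+1}\otimes I_{n_y+1}\otimes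 e\{n_x+1,n_x+1\}$, $L_S=I_{n_z+1}\otimes e\{1,n_y+1\}\otimes I_{n_x+1}$, $L_N=I_{n_z+1}\otimes e\{n_y+1,n_y+1\}\otimes I_{n_x+1}$, $L_B=e\{1,n_z+1\}\otimes I_{n_y+1}\otimes I_{n_x+1}$, $L_T=e\{n_z+1,n_z+1\}\otimes I_{n_y+1}\otimes I_{n_x+1}$; let $M$ be the number of columns of $L$. $D_{\hat n}=\mathrm{diag}(-I_{(n_y+1)(n_z+1)},I_{(n_y+1)(n_z+1)},-I_{(n_x+1)(n_z+1)},I_{(n_x+1)(n_z+1)},-I_{(n_x+1)(n_y+1)},I_{(n_x+1)(n_y+1)})$; $D_{S,b}''=\mathrm{diag}(\Delta y\Delta z\,\tilde I_{n_z+1}\otimes\tilde I_{n_y+1},\ \Delta y\Delta z\,\tilde I_{n_z+1}\otimes\tilde I_{n_y+1},\ \Delta x\Delta z\,\tilde I_{n_z+1}\otimes\tilde I_{n_x+1},\ \Delta x\Delta z\,\tilde I_{n_z+1}\otimes\tilde I_{n_x+1},\ \Delta x\Delta y\,\tilde I_{n_y+1}\otimes\tilde I_{n_x+1},\ \Delta x\Delta y\,\tilde I_{n_y+1}\otimes\tilde I_{n_x+1})$; $H_\perp=\frac{\hbar^2}{2m}L D_{\hat n}D_{S,b}''$. FDTD-Q scheme: real vectors $\psi_R^n\in\mathbb{R}^N$ and $\psi_I^{n-\frac12}\in\mathbb{R}^N$ ($n=0,\dots,n_t$), and arbitrary boundary vectors $g_R^n\in\mathbb{R}^M$, $g_I^{n+\frac12}\in\mathbb{R}^M$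 ($n=0,\dots,n_t-1$), satisfying for $n=0,\dots,n_t-1$: $\hbar D_V''\frac{\psi_R^{n+1}-\psi_R^n}{\Delta t}=H\psi_I^{n+\frac12}-H_\perp g_I^{n+\frac12}$ and $\hbar D_V''\frac{\psi_I^{n+\frac12}-\psi_I^{n-\frac12}}{\Delta t}=-H\psi_R^n+H_\perp g_R^n$. Let $\psi^n=\begin{bmatrix}\psi_R^n\\ \psi_I^{n-\frac12}\end{bmatrix}$, $g^{n+\frac12}=\begin{bmatrix}g_R^n\\ g_I^{n+\frac12}\end{bmatrix}$, $J_1=\begin{bmatrix}0&1\\-1&0\end{bmatrix}$. Total probability: $\mathcal{P}^n=(\psi^n)^T\mathbf{P}\psi^n$, $n=0,\dots,n_t$. Probability current: $\mathcal{I}_P^{n+\frac12}=\frac{2}{\hbar}\left(\frac{\psi^{n+1}+\psi^n}{2}\right)^T(J_1\otimes H_\perp)g^{n+\frac12}$, $n=0,\dots,n_t-1$. *)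

theory Defs
  imports "Jordan_Normal_Form.Matrix" "Jordan_Normal_Form.Spectral_Radius"
begin

definition kron :: "real mat \<Rightarrow> real mat \<Rightarrow> real mat" where
  "kron A B = mat (dim_row A * dim_row B) (dim_col A * dim_col B)
     (\<lambda>(i,j). A $$ (i div dim_row B, j div dim_col B) * B $$ (i mod dim_row B, j mod dim_col B))"

definition hcat :: "real mat \<Rightarrow> real mat \<Rightarrow> real mat" where
  "hcat A B = four_block_mat A B (0\<^sub>m 0 (dim_col A)) (0\<^sub>m 0 (dim_col B))"

abbreviation bdiag :: "real mat list \<Rightarrow> real mat" where
  "bdiag As \<equiv> diag_block_mat As"

definition diag_inv :: "real mat \<Rightarrow> real mat" where
  "diag_inv D = mat_diag (dim_row D) (\<lambda>i. 1 / D $$ (i,i))"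

definition diag_inv_sqrt :: "real mat \<Rightarrow> real mat" where
  "diag_inv_sqrt D = mat_diag (dim_row D) (\<lambda>i. 1 / sqrt (D $$ (i,i)))"

definition Itil :: "nat \<Rightarrow> real mat" where
  "Itil p = mat_diag p (\<lambda>i. if i = 0 \<or> i = p - 1 then 1/2 else 1)"

definition Wm :: "nat \<Rightarrow> real mat" where
  "Wm p = mat p (p+1) (\<lambda>(i,j). (if j = i + 1 then 1 else 0) - (if j = i then 1 else 0))"

text \<open>$e\{p,q\}$: $q \times 1$ column with 1 in (1-based) position $p$.\<close>
definition evec :: "nat \<Rightarrow> nat \<Rightarrow> real mat" where
  "evec p q = mat q 1 (\<lambda>(i,j). if i = p - 1 then 1 else 0)"

abbreviation Id :: "nat \<Rightarrow> real mat" where "Id p \<equiv> 1\<^sub>m p"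

abbreviation kron3 :: "real mat \<Rightarrow> real mat \<Rightarrow> real mat \<Rightarrow> real mat" where
  "kron3 A B C \<equiv> kron A (kron B C)"

definition Nnodes :: "nat \<Rightarrow> nat \<Rightarrow> nat \<Rightarrow> nat" where
  "Nnodes nx ny nz = (nx+1)*(ny+1)*(nz+1)"

definition DV :: "nat \<Rightarrow> nat \<Rightarrow> nat \<Rightarrow> real \<Rightarrow> real \<Rightarrow> real \<Rightarrow> real mat" where
  "DV nx ny nz dx dy dz = (dx*dy*dz) \<cdot>\<^sub>m kron3 (Itil (nz+1)) (Itil (ny+1)) (Itil (nx+1))"

definition Dx :: "nat \<Rightarrow> nat \<Rightarrow> nat \<Rightarrow> real mat" where
  "Dx nx ny nz = - kron3 (Id (nz+1)) (Id (ny+1)) (transpose_mat (Wm nx))"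
definition Dy :: "nat \<Rightarrow> nat \<Rightarrow> nat \<Rightarrow> real mat" where
  "Dy nx ny nz = - kron3 (Id (nz+1)) (transpose_mat (Wm ny)) (Id (nx+1))"
definition Dz :: "nat \<Rightarrow> nat \<Rightarrow> nat \<Rightarrow> real mat" where
  "Dz nx ny nz = - kron3 (transpose_mat (Wm nz)) (Id (ny+1)) (Id (nx+1))"

definition Dmat :: "nat \<Rightarrow> nat \<Rightarrow> nat \<Rightarrow> real mat" where
  "Dmat nx ny nz = hcat (Dx nx ny nz) (hcat (Dy nx ny nz) (Dz nx ny nz))"

definition DS :: "nat \<Rightarrow> nat \<Rightarrow> nat \<Rightarrow> real \<Rightarrow> real \<Rightarrow> real \<Rightarrow> real mat" where
  "DS nx ny nz dx dy dz = bdiag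
     [(dy*dz) \<cdot>\<^sub>m kron3 (Itil (nz+1)) (Itil (ny+1)) (Id nx),
      (dx*dz) \<cdot>\<^sub>m kron3 (Itil (nz+1)) (Id ny) (Itil (nx+1)),
      (dx*dy) \<cdot>\<^sub>m kron3 (Id nz) (Itil (ny+1)) (Itil (nx+1))]"

definition Dl :: "nat \<Rightarrow> nat \<Rightarrow> nat \<Rightarrow> real \<Rightarrow> real \<Rightarrow> real \<Rightarrow> real mat" where
  "Dl nx ny nz dx dy dz = bdiag
     [dx \<cdot>\<^sub>m Id (nx*(ny+1)*(nz+1)), dy \<cdot>\<^sub>m Id ((nx+1)*ny*(nz+1)), dz \<cdot>\<^sub>m Id ((nx+1)*(ny+1)*nz)]"

definition DU :: "real vec \<Rightarrow> real mat" where
  "DU U = mat_diag (dim_vec U) (\<lambda>i. U $ i)"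

definition Hmat :: "real \<Rightarrow> real \<Rightarrow> nat \<Rightarrow> nat \<Rightarrow> nat \<Rightarrow> real \<Rightarrow> real \<Rightarrow> real \<Rightarrow> real vec \<Rightarrow> real mat" where
  "Hmat hbar m nx ny nz dx dy dz U =
     (hbar^2 / (2*m)) \<cdot>\<^sub>m (Dmat nx ny nz * DS nx ny nz dx dy dz * diag_inv (Dl nx ny nz dx dy dz)
        * transpose_mat (Dmat nx ny nz))
     + DV nx ny nz dx dy dz * DU U"

definition Pmat :: "real \<Rightarrow> real \<Rightarrow> real \<Rightarrow> nat \<Rightarrow> nat \<Rightarrow> nat \<Rightarrow> real \<Rightarrow> real \<Rightarrow> real \<Rightarrow> real vec \<Rightarrow> real mat" where
  "Pmat hbar m dt nx ny nz dx dy dz U =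
     (let V = DV nx ny nz dx dy dz; K = (- dt / (2*hbar)) \<cdot>\<^sub>m Hmat hbar m nx ny nz dx dy dz U
      in four_block_mat V K K V)"

definition Lmat :: "nat \<Rightarrow> nat \<Rightarrow> nat \<Rightarrow> real mat" where
  "Lmat nx ny nz = hcat (kron3 (Id (nz+1)) (Id (ny+1)) (evec 1 (nx+1)))
     (hcat (kron3 (Id (nz+1)) (Id (ny+1)) (evec (nx+1) (nx+1)))
     (hcat (kron3 (Id (nz+1)) (evec 1 (ny+1)) (Id (nx+1)))
     (hcat (kron3 (Id (nz+1)) (evec (ny+1) (ny+1)) (Id (nx+1)))
     (hcat (kron3 (evec 1 (nz+1)) (Id (ny+1)) (Id (nx+1)))
           (kron3 (evec (nz+1) (nz+1)) (Id (ny+1)) (Id (nx+1)))))))"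

definition Mbnd :: "nat \<Rightarrow> nat \<Rightarrow> nat \<Rightarrow> nat" where
  "Mbnd nx ny nz = dim_col (Lmat nx ny nz)"

definition Dn :: "nat \<Rightarrow> nat \<Rightarrow> nat \<Rightarrow> real mat" where
  "Dn nx ny nz = bdiag
     [- Id ((ny+1)*(nz+1)), Id ((ny+1)*(nz+1)),
      - Id ((nx+1)*(nz+1)), Id ((nx+1)*(nz+1)),
      - Id ((nx+1)*(ny+1)), Id ((nx+1)*(ny+1))]"

definition DSb :: "nat \<Rightarrow> nat \<Rightarrow> nat \<Rightarrow> real \<Rightarrow> real \<Rightarrow> real \<Rightarrow> real mat" where
  "DSb nx ny nz dx dy dz = bdiag
     [(dy*dz) \<cdot>\<^sub>m kron (Itil (nz+1)) (Itil (ny+1)),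
      (dy*dz) \<cdot>\<^sub>m kron (Itil (nz+1)) (Itil (ny+1)),
      (dx*dz) \<cdot>\<^sub>m kron (Itil (nz+1)) (Itil (nx+1)),
      (dx*dz) \<cdot>\<^sub>m kron (Itil (nz+1)) (Itil (nx+1)),
      (dx*dy) \<cdot>\<^sub>m kron (Itil (ny+1)) (Itil (nx+1)),
      (dx*dy) \<cdot>\<^sub>m kron (Itil (ny+1)) (Itil (nx+1))]"

definition Hperp :: "real \<Rightarrow> real \<Rightarrow> nat \<Rightarrow> nat \<Rightarrow> nat \<Rightarrow> real \<Rightarrow> real \<Rightarrow> real \<Rightarrow> real mat" where
  "Hperp hbar m nx ny nz dx dy dz =
     (hbar^2 / (2*m)) \<cdot>\<^sub>m (Lmat nx ny nz * Dn nx ny nz * DSb nx ny nz dx dy dz)"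

definition J1 :: "real mat" where
  "J1 = mat 2 2 (\<lambda>(i,j). if i = 0 \<and> j = 1 then 1 else if i = 1 \<and> j = 0 then -1 else 0)"

definition dt_CFL :: "real \<Rightarrow> real \<Rightarrow> nat \<Rightarrow> nat \<Rightarrow> nat \<Rightarrow> real \<Rightarrow> real \<Rightarrow> real \<Rightarrow> real vec \<Rightarrow> real" where
  "dt_CFL hbar m nx ny nz dx dy dz U =
     (let S = diag_inv_sqrt (DV nx ny nz dx dy dz)
      in 2 / spectral_radius (map_mat complex_of_real
              ((1/hbar) \<cdot>\<^sub>m (S * Hmat hbar m nx ny nz dx dy dz U * S))))"

end

theory Submission
  imports Defs
begin


lemma sym_bf:
  fixes A :: "real mat"
  assumes A: "A \<in> carrier_mat n n" and s: "transpose_mat A = A"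
    and x: "x \<in> carrier_vec n" and y: "y \<in> carrier_vec n"
  shows "x \<bullet> (A *\<^sub>v y) = y \<bullet> (A *\<^sub>v x)"
proof -
  have "x \<bullet> (A *\<^sub>v y) = (transpose_mat A *\<^sub>v x) \<bullet> y"
    using transpose_vec_mult_scalar[OF A y x] by simp
  also have "\<dots> = y \<bullet> (A *\<^sub>v x)" using s A x y by (simp add: comm_scalar_prod[of _ n])
  finally show ?thesis .
qed

lemma bf_add_left:
  fixes A :: "real mat"
  assumes A: "A \<in> carrier_mat n m" and x: "x \<in> carrier_vec n" "x' \<in> carrier_vec n"
    and y: "y \<in> carrier_vec m"
  shows "(x + x') \<bullet> (A *\<^sub>v y) = x \<bullet> (A *\<^sub>v y) + x' \<bullet> (A *\<^sub>v y)"
  using add_scalar_prod_distrib[of x n x' "A *\<^sub>v y"] A x y by auto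

lemma bf_minus_left:
  fixes A :: "real mat"
  assumes A: "A \<in> carrier_mat n m" and x: "x \<in> carrier_vec n" "x' \<in> carrier_vec n"
    and y: "y \<in> carrier_vec m"
  shows "(x - x') \<bullet> (A *\<^sub>v y) = x \<bullet> (A *\<^sub>v y) - x' \<bullet> (A *\<^sub>v y)"
  using minus_scalar_prod_distrib[of x n x' "A *\<^sub>v y"] A x y by auto

lemma bf_add_right:
  fixes A :: "real mat"
  assumes A: "A \<in> carrier_mat n m" and x: "x \<in> carrier_vec n"
    and y: "y \<in> carrier_vec m" "y' \<in> carrier_vec m"
  shows "x \<bullet> (A *\<^sub>v (y + y')) = x \<bullet> (A *\<^sub>v y) + x \<bullet> (A *\<^sub>v y')"
  using A x y by (simp add: mult_add_distrib_mat_vec[OF A y] scalar_prod_add_distrib[of x n])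

lemma bf_minus_right:
  fixes A :: "real mat"
  assumes A: "A \<in> carrier_mat n m" and x: "x \<in> carrier_vec n"
    and y: "y \<in> carrier_vec m" "y' \<in> carrier_vec m"
  shows "x \<bullet> (A *\<^sub>v (y - y')) = x \<bullet> (A *\<^sub>v y) - x \<bullet> (A *\<^sub>v y')"
  using A x y by (simp add: mult_minus_distrib_mat_vec[OF A y] scalar_prod_minus_distrib[of x n])


lemma smult_append_vec:
  fixes a b :: "real vec"
  shows "c \<cdot>\<^sub>v (a @\<^sub>v b) = (c \<cdot>\<^sub>v a) @\<^sub>v (c \<cdot>\<^sub>v b)"
  by (intro eq_vecI, auto)

lemma quad_block:
  fixes V K :: "real mat"
  assumes V: "V \<in> carrier_mat N N" and K: "K \<in> carrier_mat N N" and sK: "transpose_mat K = K"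
    and a: "a \<in> carrier_vec N" and b: "b \<in> carrier_vec N"
  shows "(a @\<^sub>v b) \<bullet> (four_block_mat V K K V *\<^sub>v (a @\<^sub>v b))
     = a \<bullet> (V *\<^sub>v a) + b \<bullet> (V *\<^sub>v b) + 2 * (a \<bullet> (K *\<^sub>v b))"
proof -
  have "four_block_mat V K K V *\<^sub>v (a @\<^sub>v b) = (V *\<^sub>v a + K *\<^sub>v b) @\<^sub>v (K *\<^sub>v a + V *\<^sub>v b)"
    by (rule four_block_mat_mult_vec[OF V K K V a b])
  then have "(a @\<^sub>v b) \<bullet> (four_block_mat V K K V *\<^sub>v (a @\<^sub>v b))
     = a \<bullet> (V *\<^sub>v a + K *\<^sub>v b) + b \<bullet> (K *\<^sub>v a + V *\<^sub>v b)"
    using scalar_prod_append[of a N b N] V K a b by auto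
  also have "\<dots> = a \<bullet> (V *\<^sub>v a) + a \<bullet> (K *\<^sub>v b) + (b \<bullet> (K *\<^sub>v a) + b \<bullet> (V *\<^sub>v b))"
    using V K a b by (simp add: scalar_prod_add_distrib[of _ N])
  also have "b \<bullet> (K *\<^sub>v a) = a \<bullet> (K *\<^sub>v b)" using sym_bf[OF K sK b a] .
  finally show ?thesis by simp
qed

lemma energy:
  fixes V H Hp :: "real mat"
  assumes V: "V \<in> carrier_mat N N" and H: "H \<in> carrier_mat N N" and Hp: "Hp \<in> carrier_mat N M"
    and sV: "transpose_mat V = V" and sH: "transpose_mat H = H"
    and a: "a \<in> carrier_vec N" and a': "a' \<in> carrier_vec N"
    and b: "b \<in> carrier_vec N" and b': "b' \<in> carrier_vec N"
    and gR: "gR \<in> carrier_vec M" and gI: "gI \<in> carrier_vec M"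
    and hb: "hbar \<noteq> 0" and dt: "dt \<noteq> 0"
    and e1: "(hbar / dt) \<cdot>\<^sub>v (V *\<^sub>v (a' - a)) = H *\<^sub>v b' - Hp *\<^sub>v gI"
    and e2: "(hbar / dt) \<cdot>\<^sub>v (V *\<^sub>v (b' - b)) = - (H *\<^sub>v a) + Hp *\<^sub>v gR"
  shows "((a' \<bullet> (V *\<^sub>v a') + b' \<bullet> (V *\<^sub>v b') - (dt/hbar) * (a' \<bullet> (H *\<^sub>v b')))
        - (a \<bullet> (V *\<^sub>v a) + b \<bullet> (V *\<^sub>v b) - (dt/hbar) * (a \<bullet> (H *\<^sub>v b)))) / dt
       = - ((1/hbar) * ((a' + a) \<bullet> (Hp *\<^sub>v gI) - (b' + b) \<bullet> (Hp *\<^sub>v gR)))"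
proof -
  have s1: "(a' + a) \<bullet> ((hbar / dt) \<cdot>\<^sub>v (V *\<^sub>v (a' - a))) = (a' + a) \<bullet> (H *\<^sub>v b' - Hp *\<^sub>v gI)"
    using e1 by simp
  have l1: "(a' + a) \<bullet> ((hbar / dt) \<cdot>\<^sub>v (V *\<^sub>v (a' - a))) = (hbar/dt) * (a' \<bullet> (V *\<^sub>v a') - a \<bullet> (V *\<^sub>v a))"
  proof -
    have "(a' + a) \<bullet> ((hbar / dt) \<cdot>\<^sub>v (V *\<^sub>v (a' - a))) = (hbar/dt) * ((a' + a) \<bullet> (V *\<^sub>v (a' - a)))"
      using V a a' by simp
    also have "(a' + a) \<bullet> (V *\<^sub>v (a' - a)) = a' \<bullet> (V *\<^sub>v a') - a' \<bullet> (V *\<^sub>v a) + (a \<bullet> (V *\<^sub>v a') - a \<bullet> (V *\<^sub>v a))"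
      using V a a' by (simp add: bf_add_left[OF V] bf_minus_right[OF V])
    also have "a \<bullet> (V *\<^sub>v a') = a' \<bullet> (V *\<^sub>v a)" using sym_bf[OF V sV a a'] .
    finally show ?thesis by simp
  qed
  have r1: "(a' + a) \<bullet> (H *\<^sub>v b' - Hp *\<^sub>v gI) = a' \<bullet> (H *\<^sub>v b') + a \<bullet> (H *\<^sub>v b') - (a' + a) \<bullet> (Hp *\<^sub>v gI)"
    using H Hp a a' b' gI by (simp add: scalar_prod_minus_distrib[of _ N] bf_add_left[OF H])
  have s2: "(b' + b) \<bullet> ((hbar / dt) \<cdot>\<^sub>v (V *\<^sub>v (b' - b))) = (b' + b) \<bullet> (- (H *\<^sub>v a) + Hp *\<^sub>v gR)"
    using e2 by simp
  have l2: "(b' + b) \<bullet> ((hbar / dt) \<cdot>\<^sub>v (V *\<^sub>v (b' - b))) = (hbar/dt) * (b' \<bullet> (V *\<^sub>v b') - b \<bullet> (V *\<^sub>v b))"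
  proof -
    have "(b' + b) \<bullet> ((hbar / dt) \<cdot>\<^sub>v (V *\<^sub>v (b' - b))) = (hbar/dt) * ((b' + b) \<bullet> (V *\<^sub>v (b' - b)))"
      using V b b' by simp
    also have "(b' + b) \<bullet> (V *\<^sub>v (b' - b)) = b' \<bullet> (V *\<^sub>v b') - b' \<bullet> (V *\<^sub>v b) + (b \<bullet> (V *\<^sub>v b') - b \<bullet> (V *\<^sub>v b))"
      using V b b' by (simp add: bf_add_left[OF V] bf_minus_right[OF V])
    also have "b \<bullet> (V *\<^sub>v b') = b' \<bullet> (V *\<^sub>v b)" using sym_bf[OF V sV b b'] .
    finally show ?thesis by simp
  qed
  have r2: "(b' + b) \<bullet> (- (H *\<^sub>v a) + Hp *\<^sub>v gR) = - (b' \<bullet> (H *\<^sub>v a)) - b \<bullet> (H *\<^sub>v a) + (b' + b) \<bullet> (Hp *\<^sub>v gR)"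
    using H Hp a b b' gR by (simp add: scalar_prod_add_distrib[of _ N] bf_add_left[OF H])
  have sw1: "b' \<bullet> (H *\<^sub>v a) = a \<bullet> (H *\<^sub>v b')" using sym_bf[OF H sH b' a] .
  have sw2: "b \<bullet> (H *\<^sub>v a) = a \<bullet> (H *\<^sub>v b)" using sym_bf[OF H sH b a] .
  define P1 where "P1 = a' \<bullet> (V *\<^sub>v a') - a \<bullet> (V *\<^sub>v a)"
  define P2 where "P2 = b' \<bullet> (V *\<^sub>v b') - b \<bullet> (V *\<^sub>v b)"
  have E1: "(hbar/dt) * P1 = a' \<bullet> (H *\<^sub>v b') + a \<bullet> (H *\<^sub>v b') - (a' + a) \<bullet> (Hp *\<^sub>v gI)"
    using s1 l1 r1 P1_def by simp
  have E2: "(hbar/dt) * P2 = - (a \<bullet> (H *\<^sub>v b')) - a \<bullet> (H *\<^sub>v b) + (b' + b) \<bullet> (Hp *\<^sub>v gR)"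
    using s2 l2 r2 sw1 sw2 P2_def by simp
  have "P1 + P2 = (dt/hbar) * (a' \<bullet> (H *\<^sub>v b') - a \<bullet> (H *\<^sub>v b) - (a' + a) \<bullet> (Hp *\<^sub>v gI) + (b' + b) \<bullet> (Hp *\<^sub>v gR))"
  proof -
    have "(hbar/dt) * (P1 + P2) = a' \<bullet> (H *\<^sub>v b') - a \<bullet> (H *\<^sub>v b) - (a' + a) \<bullet> (Hp *\<^sub>v gI) + (b' + b) \<bullet> (Hp *\<^sub>v gR)"
      using E1 E2 by (simp add: distrib_left)
    then show ?thesis using hb dt by (simp add: field_simps)
  qed
  then show ?thesis using hb dt unfolding P1_def P2_def
    apply (simp add: field_simps)
    apply (drule arg_cong[where f="\<lambda>x. hbar*hbar*x"])
    by (simp add: algebra_simps)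
qed


lemma cs_sum:
  fixes a b :: "nat \<Rightarrow> real"
  assumes fin: "finite I"
  shows "(\<Sum>i\<in>I. a i * b i)^2 \<le> (\<Sum>i\<in>I. (a i)^2) * (\<Sum>i\<in>I. (b i)^2)"
proof -
  define A where "A = (\<Sum>i\<in>I. (a i)^2)"
  define B where "B = (\<Sum>i\<in>I. (b i)^2)"
  define C where "C = (\<Sum>i\<in>I. a i * b i)"
  have "0 \<le> (\<Sum>i\<in>I. (B * a i - C * b i)^2)" by (rule sum_nonneg, simp)
  also have "(\<Sum>i\<in>I. (B * a i - C * b i)^2) = (\<Sum>i\<in>I. B^2 * (a i)^2 - 2 * B * C * (a i * b i) + C^2 * (b i)^2)"
    by (rule sum.cong, auto simp: power2_eq_square algebra_simps)
  also have "\<dots> = B^2 * A - 2 * B * C * C + C^2 * B"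
    unfolding A_def B_def C_def by (simp add: sum.distrib sum_subtractf sum_distrib_left)
  finally have key: "0 \<le> B * (A * B - C^2)" by (simp add: power2_eq_square algebra_simps)
  have B0: "B \<ge> 0" unfolding B_def by (rule sum_nonneg, simp)
  show ?thesis
  proof (cases "B = 0")
    case True
    then have "\<forall>i\<in>I. (b i)^2 = 0" using fin unfolding B_def
      by (subst sum_nonneg_eq_0_iff[symmetric], auto)
    then have "C = 0" unfolding C_def by simp
    then show ?thesis unfolding A_def[symmetric] B_def[symmetric] C_def[symmetric] using True by simp
  next
    case False
    with B0 have "B > 0" by simp
    with key have "C^2 \<le> A * B" by (simp add: zero_le_mult_iff)
    then show ?thesis unfolding A_def B_def C_def .
  qed
qed

lemma cs_vec:
  fixes x y :: "real vec"
  assumes x: "x \<in> carrier_vec n" and y: "y \<in> carrier_vec n"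
  shows "(x \<bullet> y)^2 \<le> (x \<bullet> x) * (y \<bullet> y)"
  using cs_sum[of "{0..<n}" "\<lambda>i. x $ i" "\<lambda>i. y $ i"] x y
  by (simp add: scalar_prod_def power2_eq_square)

lemma sym_sq_bound:
  fixes M :: "real mat"
  assumes M: "M \<in> carrier_mat n n" and s: "transpose_mat M = M" and w: "w \<in> carrier_vec n"
  shows "(w \<bullet> (M *\<^sub>v w))^2 \<le> (w \<bullet> w) * (w \<bullet> ((M * M) *\<^sub>v w))"
    and "w \<bullet> ((M * M) *\<^sub>v w) = (M *\<^sub>v w) \<bullet> (M *\<^sub>v w)"
proof -
  have "w \<bullet> ((M * M) *\<^sub>v w) = w \<bullet> (M *\<^sub>v (M *\<^sub>v w))" using M w by simp
  also have "\<dots> = (transpose_mat M *\<^sub>v w) \<bullet> (M *\<^sub>v w)"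
    using transpose_vec_mult_scalar[OF M _ w, of "M *\<^sub>v w"] M w by simp
  finally show eq: "w \<bullet> ((M * M) *\<^sub>v w) = (M *\<^sub>v w) \<bullet> (M *\<^sub>v w)" using s by simp
  show "(w \<bullet> (M *\<^sub>v w))^2 \<le> (w \<bullet> w) * (w \<bullet> ((M * M) *\<^sub>v w))"
    unfolding eq by (rule cs_vec[OF w], insert M w, auto)
qed


lemma pow_mat_add:
  fixes A :: "real mat"
  assumes A: "A \<in> carrier_mat n n"
  shows "A ^\<^sub>m (k + l) = A ^\<^sub>m k * A ^\<^sub>m l"
proof (induct l)
  case 0
  then show ?case using A by simp
next
  case (Suc l)
  have "A ^\<^sub>m (k + Suc l) = (A ^\<^sub>m k * A ^\<^sub>m l) * A" using Suc by simp
  also have "\<dots> = A ^\<^sub>m k * (A ^\<^sub>m l * A)"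
    by (rule assoc_mult_mat[of _ n n _ n _ n], insert A, auto)
  finally show ?case by simp
qed

lemma pow_mat_sym:
  fixes A :: "real mat"
  assumes A: "A \<in> carrier_mat n n" and s: "transpose_mat A = A"
  shows "transpose_mat (A ^\<^sub>m k) = A ^\<^sub>m k"
proof (induct k)
  case 0
  then show ?case using A by simp
next
  case (Suc k)
  have "transpose_mat (A ^\<^sub>m Suc k) = transpose_mat (A ^\<^sub>m k * A)" by simp
  also have "\<dots> = transpose_mat A * transpose_mat (A ^\<^sub>m k)"
    by (rule transpose_mult[of _ n n _ n], insert A, auto)
  also have "\<dots> = A * A ^\<^sub>m k" using s Suc by simp
  also have "\<dots> = A ^\<^sub>m 1 * A ^\<^sub>m k" using A by simp
  also have "\<dots> = A ^\<^sub>m (1 + k)" using pow_mat_add[OF A, of 1 k] by simp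
  also have "\<dots> = A ^\<^sub>m Suc k" by simp
  finally show ?case .
qed

lemma self_scalar_nonneg:
  fixes w :: "real vec"
  shows "0 \<le> w \<bullet> w"
  unfolding scalar_prod_def by (rule sum_nonneg, simp)

lemma quad_entry_bound:
  fixes M :: "real mat"
  assumes M: "M \<in> carrier_mat n n" and w: "w \<in> carrier_vec n"
    and b: "\<And>i j. i < n \<Longrightarrow> j < n \<Longrightarrow> \<bar>M $$ (i,j)\<bar> \<le> c"
  shows "\<bar>w \<bullet> (M *\<^sub>v w)\<bar> \<le> c * (\<Sum>i<n. \<bar>w $ i\<bar>)^2"
proof -
  have "w \<bullet> (M *\<^sub>v w) = (\<Sum>i<n. \<Sum>j<n. w $ i * (M $$ (i,j) * w $ j))"
    using M w by (auto simp: scalar_prod_def sum_distrib_left lessThan_atLeast0 intro!: sum.cong)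
  also have "\<bar>\<dots>\<bar> \<le> (\<Sum>i<n. \<Sum>j<n. \<bar>w $ i\<bar> * (c * \<bar>w $ j\<bar>))"
  proof -
    have "\<bar>(\<Sum>i<n. \<Sum>j<n. w $ i * (M $$ (i,j) * w $ j))\<bar> \<le> (\<Sum>i<n. \<bar>\<Sum>j<n. w $ i * (M $$ (i,j) * w $ j)\<bar>)"
      by (rule sum_abs)
    also have "\<dots> \<le> (\<Sum>i<n. \<Sum>j<n. \<bar>w $ i * (M $$ (i,j) * w $ j)\<bar>)"
      by (rule sum_mono, rule sum_abs)
    also have "\<dots> \<le> (\<Sum>i<n. \<Sum>j<n. \<bar>w $ i\<bar> * (c * \<bar>w $ j\<bar>))"
    proof (rule sum_mono, rule sum_mono)
      fix i j assume "i \<in> {..<n}" "j \<in> {..<n}"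
      then have "\<bar>M $$ (i,j)\<bar> \<le> c" using b by auto
      then show "\<bar>w $ i * (M $$ (i,j) * w $ j)\<bar> \<le> \<bar>w $ i\<bar> * (c * \<bar>w $ j\<bar>)"
        by (simp add: abs_mult mult_left_mono mult_right_mono)
    qed
    finally show ?thesis .
  qed
  also have "\<dots> = c * (\<Sum>i<n. \<bar>w $ i\<bar>)^2"
    by (simp add: power2_eq_square sum_distrib_left sum_distrib_right algebra_simps)
  finally show ?thesis .
qed


lemma quad_le:
  fixes C :: "real mat"
  assumes C: "C \<in> carrier_mat n n" and s: "transpose_mat C = C" and w: "w \<in> carrier_vec n"
    and b: "\<And>k i j. i < n \<Longrightarrow> j < n \<Longrightarrow> \<bar>(C ^\<^sub>m k) $$ (i,j)\<bar> \<le> c"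
  shows "\<bar>w \<bullet> (C *\<^sub>v w)\<bar> \<le> w \<bullet> w"
proof -
  define M where "M j = C ^\<^sub>m (2^j)" for j :: nat
  have Mc: "M j \<in> carrier_mat n n" for j unfolding M_def using C by simp
  have Ms: "transpose_mat (M j) = M j" for j unfolding M_def by (rule pow_mat_sym[OF C s])
  have MS: "M (Suc j) = M j * M j" for j
    unfolding M_def using pow_mat_add[OF C, of "2^j" "2^j"] by (simp add: mult_2)
  have M0: "M 0 = C" unfolding M_def using C by simp
  define K where "K = c * (\<Sum>i<n. \<bar>w $ i\<bar>)^2"
  have bnd: "\<bar>w \<bullet> (M j *\<^sub>v w)\<bar> \<le> K" for j
    unfolding K_def by (rule quad_entry_bound[OF Mc w], unfold M_def, rule b)
  define q where "q = w \<bullet> (C *\<^sub>v w)"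
  define s where "s = w \<bullet> w"
  have s0: "s \<ge> 0" unfolding s_def by (rule self_scalar_nonneg)
  have claim: "\<bar>q\<bar>^(2^j) \<le> s^(2^j - 1) * \<bar>w \<bullet> (M j *\<^sub>v w)\<bar>" for j
  proof (induct j)
    case 0
    then show ?case unfolding q_def M0 by simp
  next
    case (Suc j)
    have "\<bar>q\<bar>^(2^Suc j) = (\<bar>q\<bar>^(2^j))^2" by (simp add: power_mult[symmetric] mult.commute)
    also have "\<dots> \<le> (s^(2^j - 1) * \<bar>w \<bullet> (M j *\<^sub>v w)\<bar>)^2"
      by (rule power_mono[OF Suc], simp)
    also have "\<dots> = s^(2^j - 1) * s^(2^j - 1) * (w \<bullet> (M j *\<^sub>v w))^2"
      by (simp add: power2_eq_square)
    also have "\<dots> \<le> s^(2^j - 1) * s^(2^j - 1) * (s * (w \<bullet> ((M j * M j) *\<^sub>v w)))"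
      by (rule mult_left_mono, unfold s_def, rule sym_sq_bound(1)[OF Mc Ms w], insert s0, simp add: s_def)
    also have "\<dots> = s^(2^Suc j - 1) * \<bar>w \<bullet> (M (Suc j) *\<^sub>v w)\<bar>"
    proof -
      have nn: "w \<bullet> ((M j * M j) *\<^sub>v w) \<ge> 0"
        unfolding sym_sq_bound(2)[OF Mc Ms w] by (rule self_scalar_nonneg)
      have e: "2^Suc j - 1 = (2^j - 1) + (2^j - 1) + (1::nat)"
      proof -
        have "(1::nat) \<le> 2^j" by simp
        then show ?thesis by (subst power_Suc, arith)
      qed
      show ?thesis unfolding MS e power_add using nn by simp
    qed
    finally show ?case .
  qed
  show ?thesis
  proof (cases "s = 0")
    case True
    have "q^2 \<le> s * (w \<bullet> ((C * C) *\<^sub>v w))" unfolding q_def s_def by (rule sym_sq_bound(1)[OF C s w])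
    then have "q^2 \<le> 0" using True by simp
    then have "q = 0" by (simp only: power2_less_eq_zero_iff)
    then show ?thesis using True unfolding q_def s_def by simp
  next
    case False
    with s0 have sp: "s > 0" by simp
    define t where "t = \<bar>q\<bar> / s"
    have tb: "t^(2^j) \<le> K / s" for j
    proof -
      have m: "s^(2^j - 1) * \<bar>w \<bullet> (M j *\<^sub>v w)\<bar> \<le> s^(2^j - 1) * K"
        by (rule mult_left_mono[OF bnd], simp add: s0)
      have "\<bar>q\<bar>^(2^j) \<le> s^(2^j - 1) * K" using claim[of j] m by linarith
      have e: "s^(2^j) = s^(2^j - 1) * s"
      proof -
        have "(2::nat)^j = Suc (2^j - 1)" by simp
        then show ?thesis by (metis power_Suc2)
      qed
      have "\<bar>q\<bar>^(2^j) / s^(2^j) \<le> s^(2^j - 1) * K / s^(2^j)"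
        using sp \<open>\<bar>q\<bar>^(2^j) \<le> s^(2^j - 1) * K\<close> by (simp add: divide_right_mono)
      also have "\<dots> = K / s" using sp unfolding e by simp
      finally show ?thesis unfolding t_def by (simp add: power_divide)
    qed
    have "t \<le> 1"
    proof (rule ccontr)
      assume "\<not> t \<le> 1"
      then have t1: "t > 1" by simp
      obtain j where j: "K / s < of_nat j * (t - 1)" using ex_less_of_nat_mult[of "t - 1" "K/s"] t1 by auto
      have "1 + of_nat j * (t - 1) \<le> (1 + (t - 1))^j" by (rule Bernoulli_inequality, insert t1, simp)
      also have "\<dots> = t^j" by simp
      also have "\<dots> \<le> t^(2^j)" by (rule power_increasing, insert t1, auto intro: less_imp_le)
      also have "\<dots> \<le> K / s" by (rule tb)
      finally show False using j by simp
    qed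
    then have "\<bar>q\<bar> \<le> s" unfolding t_def using sp by (simp add: divide_le_eq)
    then show ?thesis unfolding q_def s_def .
  qed
qed


lemma of_real_semiring_hom: "semiring_hom complex_of_real"
  by (unfold_locales, auto)

lemma powers_bounded:
  fixes B :: "real mat"
  assumes B: "B \<in> carrier_mat n n" and n: "n > 0" and dt0: "0 < dt"
    and dtl: "dt < 2 / spectral_radius (map_mat complex_of_real B)"
  shows "\<exists>c. \<forall>k i j. i < n \<longrightarrow> j < n \<longrightarrow> \<bar>(((dt/2) \<cdot>\<^sub>m B) ^\<^sub>m k) $$ (i,j)\<bar> \<le> c"
proof -
  define Bc where "Bc = map_mat complex_of_real B"
  define C where "C = (dt/2) \<cdot>\<^sub>m B"
  define Cc where "Cc = map_mat complex_of_real C"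
  have Bcc: "Bc \<in> carrier_mat n n" unfolding Bc_def using B by simp
  have Cr: "C \<in> carrier_mat n n" unfolding C_def using B by simp
  have Ccc: "Cc \<in> carrier_mat n n" unfolding Cc_def using Cr by simp
  define \<rho> where "\<rho> = spectral_radius Bc"
  have rho: "\<rho> > 0"
  proof (rule ccontr)
    assume "\<not> \<rho> > 0"
    then have "2 / \<rho> \<le> 0" by (simp add: divide_nonneg_nonpos)
    then show False using dtl dt0 unfolding \<rho>_def Bc_def by linarith
  qed
  have drho: "dt * \<rho> < 2" using dtl rho unfolding \<rho>_def[symmetric] Bc_def[symmetric]
    by (simp add: pos_less_divide_eq)
  have CcBc: "Cc = complex_of_real (dt/2) \<cdot>\<^sub>m Bc"
    unfolding Cc_def C_def Bc_def by (rule eq_matI, auto)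
  have src: "spectral_radius Cc < 1"
  proof -
    obtain mu where mu: "mu \<in> spectrum Cc" and eq: "spectral_radius Cc = norm mu"
      using spectral_radius_mem_max(1)[OF Ccc n] by auto
    from mu obtain v where ev: "eigenvector Cc v mu"
      unfolding spectrum_def eigenvalue_def by auto
    then have v: "v \<in> carrier_vec n" and v0: "v \<noteq> 0\<^sub>v n" and Cv: "Cc *\<^sub>v v = mu \<cdot>\<^sub>v v"
      unfolding eigenvector_def using Ccc by auto
    have Cv2: "Cc *\<^sub>v v = complex_of_real (dt/2) \<cdot>\<^sub>v (Bc *\<^sub>v v)"
      unfolding CcBc by (rule eq_vecI, insert Bcc v, auto simp: scalar_prod_def sum_distrib_left ac_simps)
    have d0: "complex_of_real (dt/2) \<noteq> 0" using dt0 by simp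
    have "Bc *\<^sub>v v = (mu / complex_of_real (dt/2)) \<cdot>\<^sub>v v"
    proof (rule eq_vecI)
      fix i assume i: "i < dim_vec ((mu / complex_of_real (dt/2)) \<cdot>\<^sub>v v)"
      have "(Cc *\<^sub>v v) $ i = (mu \<cdot>\<^sub>v v) $ i" using Cv by simp
      then have "complex_of_real (dt/2) * (Bc *\<^sub>v v) $ i = mu * v $ i"
        unfolding Cv2 using i Bcc v by simp
      then show "(Bc *\<^sub>v v) $ i = ((mu / complex_of_real (dt/2)) \<cdot>\<^sub>v v) $ i"
        using i d0 by (simp add: field_simps)
    qed (insert Bcc v, auto)
    then have "eigenvector Bc v (mu / complex_of_real (dt/2))"
      unfolding eigenvector_def using v v0 Bcc by auto
    then have "mu / complex_of_real (dt/2) \<in> spectrum Bc"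
      unfolding spectrum_def eigenvalue_def by auto
    then have "norm (mu / complex_of_real (dt/2)) \<le> \<rho>"
      unfolding \<rho>_def by (intro spectral_radius_mem_max(2)[OF Bcc n], auto)
    then have "norm mu / (dt/2) \<le> \<rho>" using dt0 by (simp add: norm_divide)
    then have "norm mu \<le> (dt/2) * \<rho>" using dt0 by (simp add: divide_le_eq mult.commute)
    then show ?thesis using eq drho by simp
  qed
  from spectral_radius_jnf_norm_bound_less_1_upper_triangular[OF Ccc src]
  obtain c where c: "\<And>k. norm_bound (Cc ^\<^sub>m k) c" by auto
  have "\<bar>(C ^\<^sub>m k) $$ (i,j)\<bar> \<le> c" if i: "i < n" and j: "j < n" for k i j
  proof -
    have "Cc ^\<^sub>m k = map_mat complex_of_real (C ^\<^sub>m k)"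
      unfolding Cc_def using semiring_hom.mat_hom_pow[OF of_real_semiring_hom Cr] by simp
    then have "(Cc ^\<^sub>m k) $$ (i,j) = complex_of_real ((C ^\<^sub>m k) $$ (i,j))" using i j Cr by simp
    moreover have "norm ((Cc ^\<^sub>m k) $$ (i,j)) \<le> c" using c[of k] i j Ccc unfolding norm_bound_def by simp
    ultimately show ?thesis by simp
  qed
  then show ?thesis unfolding C_def by blast
qed


lemma bf_sum:
  fixes A :: "real mat"
  assumes A: "A \<in> carrier_mat n n" and x: "x \<in> carrier_vec n" and y: "y \<in> carrier_vec n"
  shows "x \<bullet> (A *\<^sub>v y) = (\<Sum>i<n. \<Sum>j<n. x $ i * A $$ (i,j) * y $ j)"
  using A x y by (auto simp: scalar_prod_def sum_distrib_left lessThan_atLeast0 ac_simps intro!: sum.cong)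

lemma polar_bound:
  fixes C :: "real mat"
  assumes C: "C \<in> carrier_mat n n" and s: "transpose_mat C = C"
    and u: "u \<in> carrier_vec n" and v: "v \<in> carrier_vec n"
    and q: "\<And>w. w \<in> carrier_vec n \<Longrightarrow> \<bar>w \<bullet> (C *\<^sub>v w)\<bar> \<le> w \<bullet> w"
  shows "2 * (u \<bullet> (C *\<^sub>v v)) \<le> u \<bullet> u + v \<bullet> v"
proof -
  have uv1: "u + v \<in> carrier_vec n" and uv2: "u - v \<in> carrier_vec n" using u v by auto
  have e1: "(u + v) \<bullet> (C *\<^sub>v (u + v)) = u \<bullet> (C *\<^sub>v u) + u \<bullet> (C *\<^sub>v v) + (v \<bullet> (C *\<^sub>v u) + v \<bullet> (C *\<^sub>v v))"
    using C u v by (simp add: bf_add_left[OF C] bf_add_right[OF C])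
  have e2: "(u - v) \<bullet> (C *\<^sub>v (u - v)) = u \<bullet> (C *\<^sub>v u) - u \<bullet> (C *\<^sub>v v) - (v \<bullet> (C *\<^sub>v u) - v \<bullet> (C *\<^sub>v v))"
    using C u v by (simp add: bf_minus_left[OF C] bf_minus_right[OF C])
  have sw: "v \<bullet> (C *\<^sub>v u) = u \<bullet> (C *\<^sub>v v)" using sym_bf[OF C s v u] .
  have I: "1\<^sub>m n \<in> carrier_mat n n" by simp
  have f1: "(u + v) \<bullet> (u + v) = u \<bullet> u + u \<bullet> v + (v \<bullet> u + v \<bullet> v)"
    using bf_add_left[OF I, of u v "u+v"] bf_add_right[OF I, of u u v] bf_add_right[OF I, of v u v] u v by simp
  have f2: "(u - v) \<bullet> (u - v) = u \<bullet> u - u \<bullet> v - (v \<bullet> u - v \<bullet> v)"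
    using bf_minus_left[OF I, of u v "u-v"] bf_minus_right[OF I, of u u v] bf_minus_right[OF I, of v u v] u v by simp
  have "4 * (u \<bullet> (C *\<^sub>v v)) = (u + v) \<bullet> (C *\<^sub>v (u + v)) - (u - v) \<bullet> (C *\<^sub>v (u - v))"
    using e1 e2 sw by simp
  also have "\<dots> \<le> (u + v) \<bullet> (u + v) + (u - v) \<bullet> (u - v)"
    using q[OF uv1] q[OF uv2] by linarith
  also have "\<dots> = 2 * (u \<bullet> u + v \<bullet> v)" using f1 f2 by simp
  finally show ?thesis by simp
qed


lemma smult_mat_vec:
  fixes A :: "real mat"
  assumes A: "A \<in> carrier_mat n m" and v: "v \<in> carrier_vec m"
  shows "(c \<cdot>\<^sub>m A) *\<^sub>v v = c \<cdot>\<^sub>v (A *\<^sub>v v)"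
  by (rule eq_vecI, insert A v, auto simp: scalar_prod_def sum_distrib_left ac_simps)

lemma pos_prob:
  fixes V H :: "real mat"
  assumes V: "V \<in> carrier_mat N N" and N: "N > 0" and dV: "diagonal_mat V"
    and pV: "\<And>i. i < N \<Longrightarrow> V $$ (i,i) > 0"
    and H: "H \<in> carrier_mat N N" and sH: "transpose_mat H = H"
    and hb: "hbar > 0" and dt0: "0 < dt"
    and dtl: "dt < 2 / spectral_radius (map_mat complex_of_real
          ((1/hbar) \<cdot>\<^sub>m (diag_inv_sqrt V * H * diag_inv_sqrt V)))"
    and a: "a \<in> carrier_vec N" and b: "b \<in> carrier_vec N"
  shows "0 \<le> (a @\<^sub>v b) \<bullet> (four_block_mat V ((- dt / (2*hbar)) \<cdot>\<^sub>m H) ((- dt / (2*hbar)) \<cdot>\<^sub>m H) V *\<^sub>v (a @\<^sub>v b))"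
proof -
  define d where "d i = V $$ (i,i)" for i
  define S where "S = diag_inv_sqrt V"
  have Sd: "S = mat_diag N (\<lambda>i. 1 / sqrt (d i))" unfolding S_def diag_inv_sqrt_def d_def using V by simp
  define B where "B = (1/hbar) \<cdot>\<^sub>m (S * H * S)"
  have Bc: "B \<in> carrier_mat N N" unfolding B_def Sd
    using H mat_diag_dim[of N "\<lambda>i. 1 / sqrt (d i)"] by (metis mult_carrier_mat smult_carrier_mat)
  have Bij: "B $$ (i,j) = (1/hbar) * ((1 / sqrt (d i)) * H $$ (i,j) * (1 / sqrt (d j)))"
    if "i < N" "j < N" for i j
  proof -
    define f where "f i = 1 / sqrt (d i)" for i
    have e1: "mat_diag N f * H = mat N N (\<lambda>(i,j). f i * H $$ (i,j))"
      by (rule mat_diag_mult_left[OF H])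
    have e2: "mat N N (\<lambda>(i,j). f i * H $$ (i,j)) * mat_diag N f
       = mat N N (\<lambda>(i,j). mat N N (\<lambda>(i,j). f i * H $$ (i,j)) $$ (i,j) * f j)"
      by (rule mat_diag_mult_right, simp)
    have "S * H * S = mat N N (\<lambda>(i,j). (1 / sqrt (d i)) * H $$ (i,j) * (1 / sqrt (d j)))"
      unfolding Sd f_def[symmetric] e1 e2 by (rule eq_matI, auto simp: f_def)
    then show ?thesis unfolding B_def using that by simp
  qed
  have Hsym: "H $$ (i,j) = H $$ (j,i)" if "i < N" "j < N" for i j
    using arg_cong[OF sH, of "\<lambda>M. M $$ (j,i)"] that H by simp
  have sB: "transpose_mat B = B"
    by (rule eq_matI, insert Bc, auto simp: Bij Hsym)
  define C where "C = (dt/2) \<cdot>\<^sub>m B"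
  have Cc: "C \<in> carrier_mat N N" unfolding C_def using Bc by simp
  have "transpose_mat ((dt/2) \<cdot>\<^sub>m B) = (dt/2) \<cdot>\<^sub>m transpose_mat B" by (intro eq_matI, auto)
  then have sC: "transpose_mat C = C" unfolding C_def using sB by simp
  obtain c where c: "\<And>k i j. i < N \<Longrightarrow> j < N \<Longrightarrow> \<bar>(C ^\<^sub>m k) $$ (i,j)\<bar> \<le> c"
    using powers_bounded[OF Bc N dt0] dtl unfolding C_def B_def S_def by blast
  have q: "\<And>w. w \<in> carrier_vec N \<Longrightarrow> \<bar>w \<bullet> (C *\<^sub>v w)\<bar> \<le> w \<bullet> w"
    by (rule quad_le[OF Cc sC], auto intro: c)
  define u where "u = vec N (\<lambda>i. sqrt (d i) * a $ i)"
  define v where "v = vec N (\<lambda>i. sqrt (d i) * b $ i)"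
  have u: "u \<in> carrier_vec N" and v: "v \<in> carrier_vec N" unfolding u_def v_def by auto
  have dpos: "\<And>i. i < N \<Longrightarrow> d i > 0" unfolding d_def using pV by simp
  have Vii: "V $$ (i,j) = (if i = j then d i else 0)" if "i < N" "j < N" for i j
    using dV that V unfolding diagonal_mat_def d_def by auto
  have quadV: "x \<bullet> (V *\<^sub>v x) = (\<Sum>i<N. d i * (x $ i)^2)" if x: "x \<in> carrier_vec N" for x
  proof -
    have "x \<bullet> (V *\<^sub>v x) = (\<Sum>i<N. \<Sum>j<N. x $ i * V $$ (i,j) * x $ j)" by (rule bf_sum[OF V x x])
    also have "\<dots> = (\<Sum>i<N. \<Sum>j<N. if j = i then x $ i * d i * x $ i else 0)"
      by (rule sum.cong, simp, rule sum.cong, auto simp: Vii)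
    also have "\<dots> = (\<Sum>i<N. d i * (x $ i)^2)" by (simp add: power2_eq_square ac_simps)
    finally show ?thesis .
  qed
  have dabs: "\<And>i. i < N \<Longrightarrow> \<bar>d i\<bar> = d i" using dpos by force
  have uu: "u \<bullet> u = (\<Sum>i<N. d i * (a $ i)^2)"
    unfolding u_def scalar_prod_def using dpos
    by (auto simp: lessThan_atLeast0 power2_eq_square dabs intro!: sum.cong)
  have vv: "v \<bullet> v = (\<Sum>i<N. d i * (b $ i)^2)"
    unfolding v_def scalar_prod_def using dpos
    by (auto simp: lessThan_atLeast0 power2_eq_square dabs intro!: sum.cong)
  have uCv: "u \<bullet> (C *\<^sub>v v) = (dt/2) * (1/hbar) * (a \<bullet> (H *\<^sub>v b))"
  proof -
    have "u \<bullet> (C *\<^sub>v v) = (\<Sum>i<N. \<Sum>j<N. u $ i * C $$ (i,j) * v $ j)" by (rule bf_sum[OF Cc u v])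
    also have "\<dots> = (\<Sum>i<N. \<Sum>j<N. (dt/2) * (1/hbar) * (a $ i * H $$ (i,j) * b $ j))"
    proof (rule sum.cong, simp, rule sum.cong, simp)
      fix i j assume i: "i \<in> {..<N}" and j: "j \<in> {..<N}"
      have si: "sqrt (d i) * (1 / sqrt (d i)) = 1" using dpos[of i] i by simp
      have sj: "sqrt (d j) * (1 / sqrt (d j)) = 1" using dpos[of j] j by simp
      have "u $ i * C $$ (i,j) * v $ j = (dt/2) * (1/hbar) * (a $ i * H $$ (i,j) * b $ j)
           * (sqrt (d i) * (1 / sqrt (d i))) * (sqrt (d j) * (1 / sqrt (d j)))"
        using i j Bc unfolding u_def v_def C_def by (simp add: Bij ac_simps)
      then show "u $ i * C $$ (i,j) * v $ j = (dt/2) * (1/hbar) * (a $ i * H $$ (i,j) * b $ j)"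
        using si sj by simp
    qed
    also have "\<dots> = (dt/2) * (1/hbar) * (\<Sum>i<N. \<Sum>j<N. a $ i * H $$ (i,j) * b $ j)"
      by (simp add: sum_distrib_left)
    also have "\<dots> = (dt/2) * (1/hbar) * (a \<bullet> (H *\<^sub>v b))" using bf_sum[OF H a b] by simp
    finally show ?thesis .
  qed
  define K where "K = (- dt / (2*hbar)) \<cdot>\<^sub>m H"
  have Kc: "K \<in> carrier_mat N N" unfolding K_def using H by simp
  have "transpose_mat ((- dt / (2*hbar)) \<cdot>\<^sub>m H) = (- dt / (2*hbar)) \<cdot>\<^sub>m transpose_mat H" by (intro eq_matI, auto)
  then have sK: "transpose_mat K = K" unfolding K_def using sH by simp
  have "(a @\<^sub>v b) \<bullet> (four_block_mat V K K V *\<^sub>v (a @\<^sub>v b))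
     = a \<bullet> (V *\<^sub>v a) + b \<bullet> (V *\<^sub>v b) + 2 * (a \<bullet> (K *\<^sub>v b))"
    by (rule quad_block[OF V Kc sK a b])
  also have "a \<bullet> (K *\<^sub>v b) = (- dt / (2*hbar)) * (a \<bullet> (H *\<^sub>v b))"
    unfolding K_def using H a b by (simp add: smult_mat_vec[OF H b])
  also have "(- dt / (2*hbar)) * (a \<bullet> (H *\<^sub>v b)) = - (u \<bullet> (C *\<^sub>v v))"
    unfolding uCv using hb by simp
  also have "a \<bullet> (V *\<^sub>v a) + b \<bullet> (V *\<^sub>v b) + 2 * - (u \<bullet> (C *\<^sub>v v)) = u \<bullet> u + v \<bullet> v - 2 * (u \<bullet> (C *\<^sub>v v))"
    using quadV[OF a] quadV[OF b] uu vv by simp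
  finally have eq: "(a @\<^sub>v b) \<bullet> (four_block_mat V K K V *\<^sub>v (a @\<^sub>v b)) = u \<bullet> u + v \<bullet> v - 2 * (u \<bullet> (C *\<^sub>v v))" .
  have "2 * (u \<bullet> (C *\<^sub>v v)) \<le> u \<bullet> u + v \<bullet> v" by (rule polar_bound[OF Cc sC u v q])
  then show ?thesis using eq unfolding K_def by simp
qed


section \<open>Concrete matrices\<close>

lemma dim_kron[simp]:
  "dim_row (kron A B) = dim_row A * dim_row B"
  "dim_col (kron A B) = dim_col A * dim_col B"
  by (simp_all add: kron_def)

lemma index_kron:
  assumes "i < dim_row A * dim_row B" "j < dim_col A * dim_col B"
  shows "kron A B $$ (i,j) = A $$ (i div dim_row B, j div dim_col B) * B $$ (i mod dim_row B, j mod dim_col B)"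
  using assms by (simp add: kron_def)

lemma diag_kron:
  assumes dA: "diagonal_mat A" and dB: "diagonal_mat B" and sq: "dim_row B = dim_col B"
  shows "diagonal_mat (kron A B)"
  unfolding diagonal_mat_def
proof (intro allI impI)
  fix i j assume i: "i < dim_row (kron A B)" and j: "j < dim_col (kron A B)" and ij: "i \<noteq> j"
  let ?r = "dim_row B"
  have i': "i < dim_row A * ?r" and j': "j < dim_col A * ?r" using i j sq by auto
  then have r0: "?r > 0" by (cases "?r = 0", auto)
  have id: "i div ?r < dim_row A" using i' by (simp add: less_mult_imp_div_less mult.commute)
  have jd: "j div ?r < dim_col A" using j' by (simp add: less_mult_imp_div_less mult.commute)
  have im: "i mod ?r < dim_row B" and jm: "j mod ?r < dim_col B" using r0 sq by auto
  show "kron A B $$ (i, j) = 0"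
  proof (cases "i div ?r = j div ?r")
    case True
    then have "i mod ?r \<noteq> j mod ?r" using ij by (metis div_mult_mod_eq)
    then have "B $$ (i mod ?r, j mod ?r) = 0" using dB im jm unfolding diagonal_mat_def by auto
    then show ?thesis using index_kron[of i A B j] i' j' sq by simp
  next
    case False
    then have "A $$ (i div ?r, j div ?r) = 0" using dA id jd unfolding diagonal_mat_def by auto
    then show ?thesis using index_kron[of i A B j] i' j' sq by simp
  qed
qed

definition posdiag :: "real mat \<Rightarrow> bool" where
  "posdiag A = (\<forall>i < dim_row A. A $$ (i,i) > 0)"

lemma posdiag_kron:
  assumes pA: "posdiag A" and pB: "posdiag B" and sA: "dim_row A = dim_col A" and sB: "dim_row B = dim_col B"
  shows "posdiag (kron A B)"
  unfolding posdiag_def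
proof (intro allI impI)
  fix i assume i: "i < dim_row (kron A B)"
  let ?r = "dim_row B"
  have i': "i < dim_row A * ?r" using i by simp
  then have r0: "?r > 0" by (cases "?r = 0", auto)
  have id: "i div ?r < dim_row A" using i' by (simp add: less_mult_imp_div_less mult.commute)
  have im: "i mod ?r < dim_row B" using r0 by auto
  have "kron A B $$ (i,i) = A $$ (i div ?r, i div ?r) * B $$ (i mod ?r, i mod ?r)"
    using index_kron[of i A B i] i' sA sB by simp
  then show "kron A B $$ (i,i) > 0" using pA pB id im unfolding posdiag_def by simp
qed

lemma diag_smult: "diagonal_mat A \<Longrightarrow> diagonal_mat (c \<cdot>\<^sub>m (A :: real mat))"
  unfolding diagonal_mat_def by auto

lemma posdiag_smult: "posdiag A \<Longrightarrow> c > 0 \<Longrightarrow> dim_row A = dim_col A \<Longrightarrow> posdiag (c \<cdot>\<^sub>m A)"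
  unfolding posdiag_def by auto

lemma diag_mat_diag: "diagonal_mat (mat_diag n f)"
  unfolding diagonal_mat_def mat_diag_def by auto

lemma diag_one: "diagonal_mat (1\<^sub>m n :: real mat)"
  unfolding diagonal_mat_def by auto

lemma Itil_carrier[simp]: "Itil p \<in> carrier_mat p p"
  unfolding Itil_def by simp

lemma dim_Itil[simp]: "dim_row (Itil p) = p" "dim_col (Itil p) = p"
  unfolding Itil_def mat_diag_def by simp_all

lemma diag_Itil: "diagonal_mat (Itil p)"
  unfolding Itil_def by (rule diag_mat_diag)

lemma posdiag_Itil: "posdiag (Itil p)"
  unfolding posdiag_def Itil_def mat_diag_def by auto

lemma diag_mult:
  fixes A B :: "real mat"
  assumes A: "A \<in> carrier_mat n n" and B: "B \<in> carrier_mat n n" and dA: "diagonal_mat A" and dB: "diagonal_mat B"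
  shows "diagonal_mat (A * B)"
proof -
  have "A = mat_diag n (\<lambda>i. A $$ (i,i))" using A dA unfolding diagonal_mat_def mat_diag_def
    by (intro eq_matI, auto)
  moreover have "B = mat_diag n (\<lambda>i. B $$ (i,i))" using B dB unfolding diagonal_mat_def mat_diag_def
    by (intro eq_matI, auto)
  ultimately have "A * B = mat_diag n (\<lambda>i. A $$ (i,i) * B $$ (i,i))" by (metis mat_diag_diag)
  then show ?thesis by (simp add: diag_mat_diag)
qed

lemma diag_sym:
  fixes A :: "real mat"
  assumes A: "A \<in> carrier_mat n n" and dA: "diagonal_mat A"
  shows "transpose_mat A = A"
proof (rule eq_matI)
  fix i j assume i: "i < dim_row A" and j: "j < dim_col A"
  then show "transpose_mat A $$ (i, j) = A $$ (i, j)"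
    using A dA unfolding diagonal_mat_def by (cases "i = j", auto)
qed (insert A, auto)

lemma diag_block_diag:
  fixes As :: "real mat list"
  assumes "\<And>A. A \<in> set As \<Longrightarrow> diagonal_mat A \<and> dim_row A = dim_col A"
  shows "diagonal_mat (diag_block_mat As)"
  using assms
proof (induct As)
  case Nil
  then show ?case unfolding diagonal_mat_def by simp
next
  case (Cons A As)
  let ?B = "diag_block_mat As"
  have dB: "diagonal_mat ?B" using Cons by auto
  have dA: "diagonal_mat A" and sA: "dim_row A = dim_col A" using Cons(2) by auto
  have sB: "dim_row ?B = dim_col ?B"
    using Cons(2) by (simp add: dim_diag_block_mat, induct As, auto)
  show ?case
    unfolding diag_block_mat.simps Let_def diagonal_mat_def
  proof (intro allI impI)
    fix i j
    assume i: "i < dim_row (four_block_mat A (0\<^sub>m (dim_row A) (dim_col ?B)) (0\<^sub>m (dim_row ?B) (dim_col A)) ?B)"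
      and j: "j < dim_col (four_block_mat A (0\<^sub>m (dim_row A) (dim_col ?B)) (0\<^sub>m (dim_row ?B) (dim_col A)) ?B)"
      and ij: "i \<noteq> j"
    then show "four_block_mat A (0\<^sub>m (dim_row A) (dim_col ?B)) (0\<^sub>m (dim_row ?B) (dim_col A)) ?B $$ (i, j) = 0"
      using dA dB sA sB unfolding diagonal_mat_def by (simp only: index_mat_four_block, auto)
  qed
qed


lemma dim_hcat[simp]: "dim_row (hcat A B) = dim_row A" "dim_col (hcat A B) = dim_col A + dim_col B"
  unfolding hcat_def by simp_all

lemma dim_Wm[simp]: "dim_row (Wm p) = p" "dim_col (Wm p) = p + 1"
  unfolding Wm_def by simp_all

lemma dim_evec[simp]: "dim_row (evec p q) = q" "dim_col (evec p q) = 1"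
  unfolding evec_def by simp_all



lemma Nnodes_eq: "Nnodes nx ny nz = (nz+1)*((ny+1)*(nx+1))"
  unfolding Nnodes_def by (metis mult.commute mult.assoc)

lemma DV_carrier: "DV nx ny nz dx dy dz \<in> carrier_mat (Nnodes nx ny nz) (Nnodes nx ny nz)"
  unfolding DV_def Nnodes_eq carrier_mat_def mem_Collect_eq index_smult_mat dim_kron dim_Itil
  by (intro conjI refl)

lemma DV_diag: "diagonal_mat (DV nx ny nz dx dy dz)"
  unfolding DV_def
  apply (rule diag_smult)
  apply (rule diag_kron)
    apply (rule diag_Itil)
   apply (rule diag_kron)
     apply (rule diag_Itil)
    apply (rule diag_Itil)
   apply (simp only: dim_Itil)
  apply (simp only: dim_Itil dim_kron)
  done

lemma DV_pos:
  assumes "dx > 0" "dy > 0" "dz > 0"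
  shows "posdiag (DV nx ny nz dx dy dz)"
  unfolding DV_def
  apply (rule posdiag_smult)
    apply (rule posdiag_kron)
       apply (rule posdiag_Itil)
      apply (rule posdiag_kron)
         apply (rule posdiag_Itil)
        apply (rule posdiag_Itil)
       apply (simp only: dim_Itil)
      apply (simp only: dim_Itil)
     apply (simp only: dim_Itil)
    apply (simp only: dim_Itil dim_kron)
   apply (simp add: assms)
  apply (simp only: dim_Itil dim_kron)
  done

definition kdim :: "nat \<Rightarrow> nat \<Rightarrow> nat \<Rightarrow> nat" where
  "kdim nx ny nz = (nz+1)*((ny+1)*nx) + ((nz+1)*(ny*(nx+1)) + nz*((ny+1)*(nx+1)))"

lemma Dmat_carrier: "Dmat nx ny nz \<in> carrier_mat (Nnodes nx ny nz) (kdim nx ny nz)"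
  unfolding Dmat_def Dx_def Dy_def Dz_def Nnodes_eq kdim_def carrier_mat_def mem_Collect_eq
  apply (simp only: dim_hcat index_uminus_mat dim_kron index_transpose_mat dim_Wm index_one_mat)
  done


lemma DS_carrier: "DS nx ny nz dx dy dz \<in> carrier_mat (kdim nx ny nz) (kdim nx ny nz)"
  unfolding DS_def kdim_def carrier_mat_def mem_Collect_eq
  apply (simp only: dim_diag_block_mat list.map sum_list.Cons sum_list.Nil index_smult_mat dim_kron dim_Itil index_one_mat add_0_right)
  done

lemma DS_diag: "diagonal_mat (DS nx ny nz dx dy dz)"
  unfolding DS_def
proof (rule diag_block_diag)
  fix A assume "A \<in> set [(dy*dz) \<cdot>\<^sub>m kron3 (Itil (nz+1)) (Itil (ny+1)) (Id nx),
      (dx*dz) \<cdot>\<^sub>m kron3 (Itil (nz+1)) (Id ny) (Itil (nx+1)),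
      (dx*dy) \<cdot>\<^sub>m kron3 (Id nz) (Itil (ny+1)) (Itil (nx+1))]"
  then consider (1) "A = (dy*dz) \<cdot>\<^sub>m kron3 (Itil (nz+1)) (Itil (ny+1)) (Id nx)"
    | (2) "A = (dx*dz) \<cdot>\<^sub>m kron3 (Itil (nz+1)) (Id ny) (Itil (nx+1))"
    | (3) "A = (dx*dy) \<cdot>\<^sub>m kron3 (Id nz) (Itil (ny+1)) (Itil (nx+1))"
    by (simp only: set_simps insert_iff empty_iff, blast)
  then show "diagonal_mat A \<and> dim_row A = dim_col A"
  proof cases
    case 1
    show ?thesis unfolding 1
      by (intro conjI diag_smult diag_kron diag_Itil diag_one,
          simp_all only: dim_Itil index_one_mat dim_kron index_smult_mat)
  next
    case 2
    show ?thesis unfolding 2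
      by (intro conjI diag_smult diag_kron diag_Itil diag_one,
          simp_all only: dim_Itil index_one_mat dim_kron index_smult_mat)
  next
    case 3
    show ?thesis unfolding 3
      by (intro conjI diag_smult diag_kron diag_Itil diag_one,
          simp_all only: dim_Itil index_one_mat dim_kron index_smult_mat)
  qed
qed

lemma Dlinv_carrier: "diag_inv (Dl nx ny nz dx dy dz) \<in> carrier_mat (kdim nx ny nz) (kdim nx ny nz)"
proof -
  have "dim_row (Dl nx ny nz dx dy dz) = kdim nx ny nz"
    unfolding Dl_def kdim_def
    apply (simp only: dim_diag_block_mat list.map sum_list.Cons sum_list.Nil index_smult_mat index_one_mat add_0_right)
    apply (simp add: algebra_simps)
    done
  then show ?thesis unfolding diag_inv_def by simp
qed

lemma Dlinv_diag: "diagonal_mat (diag_inv (Dl nx ny nz dx dy dz))"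
  unfolding diag_inv_def by (rule diag_mat_diag)

lemma DU_carrier: "U \<in> carrier_vec n \<Longrightarrow> DU U \<in> carrier_mat n n"
  unfolding DU_def by auto

lemma DU_diag: "diagonal_mat (DU U)"
  unfolding DU_def by (rule diag_mat_diag)

lemma sym_DXDt:
  fixes D X :: "real mat"
  assumes D: "D \<in> carrier_mat n k" and X: "X \<in> carrier_mat k k" and sX: "transpose_mat X = X"
  shows "transpose_mat (D * X * transpose_mat D) = D * X * transpose_mat D"
proof -
  have DX: "D * X \<in> carrier_mat n k" using D X by simp
  have Dt: "transpose_mat D \<in> carrier_mat k n" using D by simp
  have "transpose_mat (D * X * transpose_mat D) = transpose_mat (transpose_mat D) * transpose_mat (D * X)"
    by (rule transpose_mult[OF DX Dt])
  also have "transpose_mat (D * X) = transpose_mat X * transpose_mat D" by (rule transpose_mult[OF D X])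
  also have "transpose_mat (transpose_mat D) * (transpose_mat X * transpose_mat D) = D * (X * transpose_mat D)"
    using sX by simp
  also have "\<dots> = D * X * transpose_mat D" using D X Dt by simp
  finally show ?thesis .
qed

lemma sym_combo:
  fixes A B :: "real mat"
  assumes A: "A \<in> carrier_mat n n" and B: "B \<in> carrier_mat n n"
    and sA: "transpose_mat A = A" and sB: "transpose_mat B = B"
  shows "transpose_mat (c \<cdot>\<^sub>m A + B) = c \<cdot>\<^sub>m A + B"
proof (rule eq_matI)
  fix i j assume i: "i < dim_row (c \<cdot>\<^sub>m A + B)" and j: "j < dim_col (c \<cdot>\<^sub>m A + B)"
  then have i': "i < n" and j': "j < n" using B by auto
  have a: "A $$ (j,i) = A $$ (i,j)" using arg_cong[OF sA, of "\<lambda>M. M $$ (i,j)"] A i' j' by simp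
  have b: "B $$ (j,i) = B $$ (i,j)" using arg_cong[OF sB, of "\<lambda>M. M $$ (i,j)"] B i' j' by simp
  show "transpose_mat (c \<cdot>\<^sub>m A + B) $$ (i, j) = (c \<cdot>\<^sub>m A + B) $$ (i, j)"
    using A B i' j' a b by simp
qed (insert A B, auto)

lemma Hmat_props:
  assumes U: "U \<in> carrier_vec (Nnodes nx ny nz)"
  shows "Hmat hbar m nx ny nz dx dy dz U \<in> carrier_mat (Nnodes nx ny nz) (Nnodes nx ny nz)"
    and "transpose_mat (Hmat hbar m nx ny nz dx dy dz U) = Hmat hbar m nx ny nz dx dy dz U"
proof -
  let ?N = "Nnodes nx ny nz" and ?k = "kdim nx ny nz"
  let ?D = "Dmat nx ny nz" and ?S = "DS nx ny nz dx dy dz" and ?L = "diag_inv (Dl nx ny nz dx dy dz)"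
  let ?V = "DV nx ny nz dx dy dz"
  have D: "?D \<in> carrier_mat ?N ?k" by (rule Dmat_carrier)
  have S: "?S \<in> carrier_mat ?k ?k" by (rule DS_carrier)
  have L: "?L \<in> carrier_mat ?k ?k" by (rule Dlinv_carrier)
  have V: "?V \<in> carrier_mat ?N ?N" by (rule DV_carrier)
  have DUc: "DU U \<in> carrier_mat ?N ?N" by (rule DU_carrier[OF U])
  have X: "?S * ?L \<in> carrier_mat ?k ?k" using S L by simp
  have sX: "transpose_mat (?S * ?L) = ?S * ?L"
    by (rule diag_sym[OF X diag_mult[OF S L DS_diag Dlinv_diag]])
  have eq: "?D * ?S * ?L * transpose_mat ?D = ?D * (?S * ?L) * transpose_mat ?D"
    using D S L by (simp add: assoc_mult_mat[of ?D ?N ?k ?S ?k ?L ?k])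
  have Y: "?D * (?S * ?L) * transpose_mat ?D \<in> carrier_mat ?N ?N" using D X by simp
  have sY: "transpose_mat (?D * (?S * ?L) * transpose_mat ?D) = ?D * (?S * ?L) * transpose_mat ?D"
    by (rule sym_DXDt[OF D X sX])
  have VU: "?V * DU U \<in> carrier_mat ?N ?N" using V DUc by simp
  have sVU: "transpose_mat (?V * DU U) = ?V * DU U"
    by (rule diag_sym[OF VU diag_mult[OF V DUc DV_diag DU_diag]])
  have H: "Hmat hbar m nx ny nz dx dy dz U = (hbar^2 / (2*m)) \<cdot>\<^sub>m (?D * (?S * ?L) * transpose_mat ?D) + ?V * DU U"
    unfolding Hmat_def eq ..
  show "Hmat hbar m nx ny nz dx dy dz U \<in> carrier_mat ?N ?N" unfolding H using Y VU by simp
  show "transpose_mat (Hmat hbar m nx ny nz dx dy dz U) = Hmat hbar m nx ny nz dx dy dz U"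
    unfolding H by (rule sym_combo[OF Y VU sY sVU])
qed


lemma Hperp_carrier:
  "Hperp hbar m nx ny nz dx dy dz \<in> carrier_mat (Nnodes nx ny nz) (Mbnd nx ny nz)"
proof -
  have r: "dim_row (Lmat nx ny nz) = Nnodes nx ny nz"
    unfolding Lmat_def Nnodes_eq
    by (simp only: dim_hcat dim_kron index_one_mat dim_evec mult_1_right)
  have c: "dim_col (DSb nx ny nz dx dy dz) = Mbnd nx ny nz"
    unfolding DSb_def Mbnd_def Lmat_def
    apply (simp only: dim_diag_block_mat list.map sum_list.Cons sum_list.Nil index_smult_mat dim_kron dim_Itil
       dim_hcat index_one_mat dim_evec add_0_right mult_1_right mult_1_left)
    done
  show ?thesis unfolding Hperp_def carrier_mat_def mem_Collect_eq
    using r c by simp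
qed

lemma div_mod_second:
  fixes i n :: nat
  assumes "n \<le> i" "i < 2 * n"
  shows "i div n = 1" "i mod n = i - n"
proof -
  have n: "n > 0" using assms by simp
  have "(i - n) div n = 0" using assms by simp
  then show "i div n = 1" using le_div_geq[OF n assms(1)] by simp
  have "(i - n) mod n = i - n" using assms by simp
  then show "i mod n = i - n" using le_mod_geq[OF assms(1)] by simp
qed

lemma kron_J1:
  fixes Hp :: "real mat"
  assumes Hp: "Hp \<in> carrier_mat n m"
  shows "kron J1 Hp = four_block_mat (0\<^sub>m n m) Hp (- Hp) (0\<^sub>m n m)"
proof (rule eq_matI)
  have dJ: "dim_row J1 = 2" "dim_col J1 = 2" unfolding J1_def by simp_all
  show "dim_row (kron J1 Hp) = dim_row (four_block_mat (0\<^sub>m n m) Hp (- Hp) (0\<^sub>m n m))"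
    using Hp dJ by simp
  show "dim_col (kron J1 Hp) = dim_col (four_block_mat (0\<^sub>m n m) Hp (- Hp) (0\<^sub>m n m))"
    using Hp dJ by simp
  fix i j
  assume i: "i < dim_row (four_block_mat (0\<^sub>m n m) Hp (- Hp) (0\<^sub>m n m))"
    and j: "j < dim_col (four_block_mat (0\<^sub>m n m) Hp (- Hp) (0\<^sub>m n m))"
  then have i2: "i < 2 * n" and j2: "j < 2 * m" by auto
  have k: "kron J1 Hp $$ (i,j) = J1 $$ (i div n, j div m) * Hp $$ (i mod n, j mod m)"
    using index_kron[of i J1 Hp j] i2 j2 dJ Hp by simp
  have J: "a < 2 \<Longrightarrow> b < 2 \<Longrightarrow> J1 $$ (a,b) = (if a = 0 \<and> b = 1 then 1 else if a = 1 \<and> b = 0 then -1 else 0)" for a b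
    unfolding J1_def by simp
  show "kron J1 Hp $$ (i, j) = four_block_mat (0\<^sub>m n m) Hp (- Hp) (0\<^sub>m n m) $$ (i, j)"
  proof (cases "i < n")
    case True
    note it = this
    show ?thesis
    proof (cases "j < m")
      case True
      then show ?thesis using it k J Hp i2 j2 by simp
    next
      case False
      then have "j div m = 1" "j mod m = j - m" using div_mod_second[of m j] j2 by auto
      then show ?thesis using it False k J Hp i2 j2 by simp
    qed
  next
    case False
    note it = this
    have id: "i div n = 1" "i mod n = i - n" using div_mod_second[of n i] i2 it by auto
    show ?thesis
    proof (cases "j < m")
      case True
      then show ?thesis using it id k J Hp i2 j2 by simp
    next
      case False
      then have "j div m = 1" "j mod m = j - m" using div_mod_second[of m j] j2 by auto
      then show ?thesis using it id False k J Hp i2 j2 by simp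
    qed
  qed
qed

theorem theorem1:
  fixes hbar m dx dy dz dt :: real
    and nx ny nz nt :: nat
    and U :: "real vec"
    and psiR psiI :: "nat \<Rightarrow> real vec"
    and gR gI :: "nat \<Rightarrow> real vec"
  assumes "hbar > 0" and "m > 0" and "dx > 0" and "dy > 0" and "dz > 0"
    and "nx \<ge> 1" and "ny \<ge> 1" and "nz \<ge> 1" and "nt \<ge> 1"
    and "U \<in> carrier_vec (Nnodes nx ny nz)"
    and "0 < dt" and "dt < dt_CFL hbar m nx ny nz dx dy dz U"
    and "\<And>n. n \<le> nt \<Longrightarrow> psiR n \<in> carrier_vec (Nnodes nx ny nz)"
    and "\<And>n. n \<le> nt \<Longrightarrow> psiI n \<in> carrier_vec (Nnodes nx ny nz)"
    and "\<And>n. n < nt \<Longrightarrow> gR n \<in> carrier_vec (Mbnd nx ny nz)"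
    and "\<And>n. n < nt \<Longrightarrow> gI n \<in> carrier_vec (Mbnd nx ny nz)"
    and "\<And>n. n < nt \<Longrightarrow>
      (hbar / dt) \<cdot>\<^sub>v (DV nx ny nz dx dy dz *\<^sub>v (psiR (n+1) - psiR n)) =
        Hmat hbar m nx ny nz dx dy dz U *\<^sub>v psiI (n+1) - Hperp hbar m nx ny nz dx dy dz *\<^sub>v gI n"
    and "\<And>n. n < nt \<Longrightarrow>
      (hbar / dt) \<cdot>\<^sub>v (DV nx ny nz dx dy dz *\<^sub>v (psiI (n+1) - psiI n)) =
        - (Hmat hbar m nx ny nz dx dy dz U *\<^sub>v psiR n) + Hperp hbar m nx ny nz dx dy dz *\<^sub>v gR n"
  shows
    "let psi = (\<lambda>n. psiR n @\<^sub>v psiI n);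
         g = (\<lambda>n. gR n @\<^sub>v gI n);
         Prob = (\<lambda>n. psi n \<bullet> (Pmat hbar m dt nx ny nz dx dy dz U *\<^sub>v psi n));
         Cur = (\<lambda>n. (2 / hbar) * (((1/2) \<cdot>\<^sub>v (psi (n+1) + psi n)) \<bullet>
                    (kron J1 (Hperp hbar m nx ny nz dx dy dz) *\<^sub>v g n)))
     in (\<forall>n \<le> nt. Prob n \<ge> 0) \<and>
        (\<forall>n < nt. (Prob (n+1) - Prob n) / dt = - Cur n)"
proof -
  let ?N = "Nnodes nx ny nz" and ?M = "Mbnd nx ny nz"
  let ?V = "DV nx ny nz dx dy dz" and ?H = "Hmat hbar m nx ny nz dx dy dz U"
    and ?Hp = "Hperp hbar m nx ny nz dx dy dz"
  let ?K = "(- dt / (2*hbar)) \<cdot>\<^sub>m ?H"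
  have hb: "hbar > 0" and dt0: "dt > 0" using assms by auto
  have V: "?V \<in> carrier_mat ?N ?N" by (rule DV_carrier)
  have sV: "transpose_mat ?V = ?V" by (rule diag_sym[OF V DV_diag])
  have pV: "\<And>i. i < ?N \<Longrightarrow> ?V $$ (i,i) > 0"
    using DV_pos[of dx dy dz nx ny nz] assms(3-5) V unfolding posdiag_def by auto
  have H: "?H \<in> carrier_mat ?N ?N" by (rule Hmat_props(1)[OF assms(10)])
  have sH: "transpose_mat ?H = ?H" by (rule Hmat_props(2)[OF assms(10)])
  have Hp: "?Hp \<in> carrier_mat ?N ?M" by (rule Hperp_carrier)
  have N0: "?N > 0" unfolding Nnodes_def by simp
  have K: "?K \<in> carrier_mat ?N ?N" using H by simp
  have sK: "transpose_mat ?K = ?K"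
  proof -
    have "transpose_mat ?K = (- dt / (2*hbar)) \<cdot>\<^sub>m transpose_mat ?H" by (intro eq_matI, auto)
    then show ?thesis using sH by simp
  qed
  have Pm: "Pmat hbar m dt nx ny nz dx dy dz U = four_block_mat ?V ?K ?K ?V"
    unfolding Pmat_def Let_def ..
  have dtl: "dt < 2 / spectral_radius (map_mat complex_of_real
          ((1/hbar) \<cdot>\<^sub>m (diag_inv_sqrt ?V * ?H * diag_inv_sqrt ?V)))"
    using assms(12) unfolding dt_CFL_def Let_def .
  have prob: "(a @\<^sub>v b) \<bullet> (Pmat hbar m dt nx ny nz dx dy dz U *\<^sub>v (a @\<^sub>v b))
      = a \<bullet> (?V *\<^sub>v a) + b \<bullet> (?V *\<^sub>v b) - (dt/hbar) * (a \<bullet> (?H *\<^sub>v b))"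
    if a: "a \<in> carrier_vec ?N" and b: "b \<in> carrier_vec ?N" for a b
  proof -
    have "a \<bullet> (?K *\<^sub>v b) = (- dt / (2*hbar)) * (a \<bullet> (?H *\<^sub>v b))"
      using H a b by (simp add: smult_mat_vec[OF H b])
    then show ?thesis unfolding Pm quad_block[OF V K sK a b] by simp
  qed
  have pos: "0 \<le> (a @\<^sub>v b) \<bullet> (Pmat hbar m dt nx ny nz dx dy dz U *\<^sub>v (a @\<^sub>v b))"
    if a: "a \<in> carrier_vec ?N" and b: "b \<in> carrier_vec ?N" for a b
    unfolding Pm by (rule pos_prob[OF V N0 DV_diag pV H sH hb dt0 dtl a b])
  have cur: "(2 / hbar) * (((1/2) \<cdot>\<^sub>v ((a' @\<^sub>v b') + (a @\<^sub>v b))) \<bullet> (kron J1 ?Hp *\<^sub>v (gr @\<^sub>v gi)))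
      = (1/hbar) * ((a' + a) \<bullet> (?Hp *\<^sub>v gi) - (b' + b) \<bullet> (?Hp *\<^sub>v gr))"
    if a: "a \<in> carrier_vec ?N" and b: "b \<in> carrier_vec ?N" and a': "a' \<in> carrier_vec ?N"
      and b': "b' \<in> carrier_vec ?N" and gr: "gr \<in> carrier_vec ?M" and gi: "gi \<in> carrier_vec ?M"
    for a b a' b' gr gi
  proof -
    have s1: "(a' @\<^sub>v b') + (a @\<^sub>v b) = (a' + a) @\<^sub>v (b' + b)"
      by (rule append_vec_add[OF a' a b' b])
    have z: "0\<^sub>m ?N ?M \<in> carrier_mat ?N ?M" by simp
    have mH: "- ?Hp \<in> carrier_mat ?N ?M" using Hp by simp
    have s2: "kron J1 ?Hp *\<^sub>v (gr @\<^sub>v gi) = (0\<^sub>m ?N ?M *\<^sub>v gr + ?Hp *\<^sub>v gi) @\<^sub>v (- ?Hp *\<^sub>v gr + 0\<^sub>m ?N ?M *\<^sub>v gi)"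
      unfolding kron_J1[OF Hp] by (rule four_block_mat_mult_vec[OF z Hp mH z gr gi])
    have X: "0\<^sub>m ?N ?M *\<^sub>v gr + ?Hp *\<^sub>v gi = ?Hp *\<^sub>v gi"
      by (rule eq_vecI, insert Hp gr gi, auto)
    have Y: "- ?Hp *\<^sub>v gr + 0\<^sub>m ?N ?M *\<^sub>v gi = - (?Hp *\<^sub>v gr)"
      by (rule eq_vecI, insert Hp gr gi, auto)
    have "((1/2) \<cdot>\<^sub>v ((a' @\<^sub>v b') + (a @\<^sub>v b))) \<bullet> (kron J1 ?Hp *\<^sub>v (gr @\<^sub>v gi))
        = ((1/2) \<cdot>\<^sub>v (a' + a)) \<bullet> (?Hp *\<^sub>v gi) + ((1/2) \<cdot>\<^sub>v (b' + b)) \<bullet> (- (?Hp *\<^sub>v gr))"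
      unfolding s1 s2 X Y smult_append_vec
      by (rule scalar_prod_append[of _ ?N _ ?N], insert a b a' b' Hp gr gi, auto)
    also have "\<dots> = (1/2) * ((a' + a) \<bullet> (?Hp *\<^sub>v gi)) - (1/2) * ((b' + b) \<bullet> (?Hp *\<^sub>v gr))"
      using a b a' b' Hp gr gi by simp
    finally have e: "((1/2) \<cdot>\<^sub>v ((a' @\<^sub>v b') + (a @\<^sub>v b))) \<bullet> (kron J1 ?Hp *\<^sub>v (gr @\<^sub>v gi))
      = (1/2) * ((a' + a) \<bullet> (?Hp *\<^sub>v gi)) - (1/2) * ((b' + b) \<bullet> (?Hp *\<^sub>v gr))" .
    show ?thesis unfolding e using hb by (simp add: field_simps)
  qed
  show ?thesis
    unfolding Let_def
  proof (intro conjI allI impI)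
    fix n assume n: "n \<le> nt"
    show "0 \<le> (psiR n @\<^sub>v psiI n) \<bullet> (Pmat hbar m dt nx ny nz dx dy dz U *\<^sub>v (psiR n @\<^sub>v psiI n))"
      by (rule pos, insert assms(13,14) n, auto)
  next
    fix n assume n: "n < nt"
    have a: "psiR n \<in> carrier_vec ?N" and b: "psiI n \<in> carrier_vec ?N"
      and a': "psiR (n+1) \<in> carrier_vec ?N" and b': "psiI (n+1) \<in> carrier_vec ?N"
      using assms(13,14) n by auto
    have gr: "gR n \<in> carrier_vec ?M" and gi: "gI n \<in> carrier_vec ?M" using assms(15,16) n by auto
    show "((psiR (n + 1) @\<^sub>v psiI (n + 1)) \<bullet> (Pmat hbar m dt nx ny nz dx dy dz U *\<^sub>v (psiR (n + 1) @\<^sub>v psiI (n + 1))) -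
          (psiR n @\<^sub>v psiI n) \<bullet> (Pmat hbar m dt nx ny nz dx dy dz U *\<^sub>v (psiR n @\<^sub>v psiI n))) / dt =
         - ((2 / hbar) * (((1 / 2) \<cdot>\<^sub>v ((psiR (n + 1) @\<^sub>v psiI (n + 1)) + (psiR n @\<^sub>v psiI n))) \<bullet>
              (kron J1 ?Hp *\<^sub>v (gR n @\<^sub>v gI n))))"
      unfolding prob[OF a b] prob[OF a' b'] cur[OF a b a' b' gr gi]
      by (rule energy[OF V H Hp sV sH a a' b b' gr gi _ _ assms(17)[OF n] assms(18)[OF n]], insert hb dt0, auto)
  qed
qed

end
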